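(* Let $m\ge1$ and $L=\mathcal{R}^*$. For $a\in\mathcal{R}$ the Lee weight of $ev(a)=(Tr(ax))_{x\in \mathcal{R}^*}$ is: (a) $0$ if $a=0$; (b) $2\cdot3^{3m}$ if $a=(u-1)^2a_3$ with $a_3\in\mathbb{F}_{3^m}^*$; (c) $2(3^{3m}-3^{2m})$ if $a\in\mathcal{R}\setminus\langle (u-1)^2\rangle$.
   Context: Let $R=\mathbb{F}_3[u]/(u^3-1)$ and $\mathcal{R}=\mathbb{F}_{3^m}[u]/(u^3-1)=\mathbb{F}_{3^m}+u\mathbb{F}_{3^m}+u^2\mathbb{F}_{3^m}$. Every element of $\mathcal{R}$ is uniquely $x_1+x_2(u-1)+x_3(u-1)^2$ with $x_i\in\mathbb{F}_{3^m}$; $\mathcal{R}^*$ (the units) consists of those with $x_1\neq0$. $\langle (u-1)^2\rangle=\{(u-1)^2a_3:a_3\in\mathbb{F}_{3^m}\}$. $Tr:\mathcal{R}\to R$ is $Tr(a+ub+u^2c)=tr(a)+u\,tr(b)+u^2tr(c)$, with $tr$ the absolute trace $\mathbb{F}_{3^m}\to\mathbb{F}_3$. The Gray map $\phi:R\to\mathbb{F}_3^3$ is $\phi(a'+ub'+u^2c')=(a',b',c')$, extended coordinatewise to $R^n\to\mathbb{F}_3^{3n}$; the Lee weight $w_L(v)$ of $v\in R^n$ is the Hamming weight of $\phi(v)$. *)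

theory Defs
  imports Main
begin

text \<open>The ring \<R> = F_{3^m}[u]/(u^3-1) is represented by triples (a0,a1,a2)
  standing for a0 + a1 u + a2 u^2, where the base field F_{3^m} is an arbitrary
  finite field type 'k with CARD('k) = 3^m.\<close>

type_synonym 'k tri = "'k \<times> 'k \<times> 'k"

text \<open>Multiplication modulo u^3 = 1.\<close>
definition rmult :: "'k::field tri \<Rightarrow> 'k tri \<Rightarrow> 'k tri" where
  "rmult a b = (case a of (a0,a1,a2) \<Rightarrow> case b of (b0,b1,b2) \<Rightarrow>
     (a0*b0 + a1*b2 + a2*b1, a0*b1 + a1*b0 + a2*b2, a0*b2 + a1*b1 + a2*b0))"

definition rone :: "'k::field tri" where "rone = (1,0,0)"

definition runits :: "'k::field tri set" where
  "runits = {a. \<exists>b. rmult a b = rone}"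

definition u_minus_1 :: "'k::field tri" where "u_minus_1 = (-1, 1, 0)"

definition u_minus_1_sq :: "'k::field tri" where "u_minus_1_sq = rmult u_minus_1 u_minus_1"

definition ideal_u1sq :: "'k::field tri set" where
  "ideal_u1sq = {rmult u_minus_1_sq r | r. True}"

text \<open>Absolute trace F_{3^m} \<rightarrow> F_3 (values lie in the prime field of 'k).\<close>
definition abs_tr :: "nat \<Rightarrow> 'k::field \<Rightarrow> 'k" where
  "abs_tr m x = (\<Sum>i<m. x ^ (3 ^ i))"

definition Tr :: "nat \<Rightarrow> 'k::field tri \<Rightarrow> 'k tri" where
  "Tr m a = (case a of (a0,a1,a2) \<Rightarrow> (abs_tr m a0, abs_tr m a1, abs_tr m a2))"

text \<open>Lee weight of a single element of R = Hamming weight of its Gray image (a',b',c').\<close>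
definition lee_wt1 :: "'k::field tri \<Rightarrow> nat" where
  "lee_wt1 a = (case a of (a0,a1,a2) \<Rightarrow>
     (if a0 = 0 then 0 else 1) + (if a1 = 0 then 0 else 1) + (if a2 = 0 then 0 else 1))"

definition lee_ev :: "nat \<Rightarrow> 'k::{field,finite} tri \<Rightarrow> nat" where
  "lee_ev m a = (\<Sum>x\<in>runits. lee_wt1 (Tr m (rmult a x)))"

end

theory Submission imports Defs "HOL-Computational_Algebra.Polynomial" begin

lemma char_card:
  fixes x :: "'k::{field,finite}"
  shows "of_nat (card (UNIV::'k set)) * x = 0"
proof -
  have "(\<Sum>y\<in>UNIV. y + x) = (\<Sum>y\<in>UNIV. (y::'k))"
    by (rule sum.reindex_bij_betw) (auto simp: bij_betw_def inj_on_def intro: image_eqI[where x="_ - x"])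
  then show ?thesis by (simp add: sum.distrib)
qed

lemma three0:
  assumes "card (UNIV :: 'k::{field,finite} set) = 3 ^ m"
  shows "(3::'k) = 0"
proof -
  have "(3::'k) ^ m = 0" using char_card[of "1::'k"] assms by simp
  then show ?thesis by simp
qed

lemma frob3:
  fixes x y :: "'k::field"
  assumes "(3::'k) = 0"
  shows "(x + y) ^ 3 = x ^ 3 + y ^ 3"
proof -
  have "(x + y) ^ 3 = x^3 + y^3 + 3 * (x*x*y + x*y*y)" by (simp add: algebra_simps power3_eq_cube)
  then show ?thesis using assms by simp
qed

lemma frob3n:
  fixes x y :: "'k::field"
  assumes "(3::'k) = 0"
  shows "(x + y) ^ (3^n) = x ^ (3^n) + y ^ (3^n)"
proof (induction n)
  case (Suc n)
  have "(x + y) ^ (3^Suc n) = ((x + y) ^ (3^n))^3" by (simp add: power_mult[symmetric] mult.commute)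
  also have "\<dots> = (x ^ (3^n))^3 + (y ^ (3^n))^3" using Suc frob3[OF assms] by simp
  finally show ?case by (simp add: power_mult[symmetric] mult.commute)
qed simp

lemma frob3_sum:
  fixes f :: "nat \<Rightarrow> 'k::field"
  assumes "(3::'k) = 0"
  shows "(\<Sum>i<m. f i) ^ 3 = (\<Sum>i<m. f i ^ 3)"
  by (induction m) (simp_all add: frob3[OF assms])

lemma tr_add:
  assumes "(3::'k::field) = 0"
  shows "abs_tr m (x + y) = abs_tr m x + abs_tr m (y::'k)"
  unfolding abs_tr_def by (simp add: frob3n[OF assms] sum.distrib)

lemma fermat:
  fixes x :: "'k::{field,finite}"
  shows "x ^ card (UNIV::'k set) = x"
proof (cases "x = 0")
  case True then show ?thesis by (simp add: power_0_left)
next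
  case False
  let ?A = "UNIV - {0::'k}"
  have "(\<Prod>y\<in>?A. x * y) = (\<Prod>y\<in>?A. y)"
    using False
    apply (intro prod.reindex_bij_betw)
    apply (auto simp: bij_betw_def inj_on_def image_iff)
    subgoal for z apply (cases "z = 0") apply simp apply (erule ballE[where x="z / x"]) by auto
    done
  then have "x ^ card ?A * (\<Prod>y\<in>?A. y) = 1 * (\<Prod>y\<in>?A. y)" by (simp add: prod.distrib)
  moreover have "(\<Prod>y\<in>?A. y) \<noteq> 0" by simp
  ultimately have "x ^ card ?A = 1" by simp
  moreover have "card (UNIV::'k set) = Suc (card ?A)"
  proof -
    have "card (UNIV::'k set) > 0" by (simp add: card_gt_0_iff)
    then show ?thesis by (simp add: card_Diff_singleton)
  qed
  ultimately show ?thesis by (metis power_Suc mult_1_right)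
qed

lemma tr_cube:
  fixes x :: "'k::{field,finite}"
  assumes card: "card (UNIV :: 'k set) = 3 ^ m" and m: "m \<ge> 1"
  shows "abs_tr m x ^ 3 = abs_tr m x"
proof -
  have t: "(3::'k) = 0" by (rule three0[OF card])
  obtain n where n: "m = Suc n" using m by (cases m) auto
  have "abs_tr m x ^ 3 = (\<Sum>i<m. x ^ (3 ^ Suc i))"
    unfolding abs_tr_def frob3_sum[OF t] by (simp add: power_mult[symmetric] mult.commute)
  also have "\<dots> = (\<Sum>i<n. x ^ (3 ^ Suc i)) + x ^ (3 ^ m)" by (simp add: n)
  also have "x ^ (3 ^ m) = x" using fermat[of x] card by simp
  also have "(\<Sum>i<n. x ^ (3 ^ Suc i)) + x = abs_tr m x"
    unfolding abs_tr_def n sum.lessThan_Suc_shift by simp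
  finally show ?thesis .
qed

lemma tr_vals:
  fixes x :: "'k::{field,finite}"
  assumes card: "card (UNIV :: 'k set) = 3 ^ m" and m: "m \<ge> 1"
  shows "abs_tr m x = 0 \<or> abs_tr m x = 1 \<or> abs_tr m x = -1"
proof -
  let ?t = "abs_tr m x"
  have "?t * (?t - 1) * (?t + 1) = 0" using tr_cube[OF card m, of x]
    by (simp add: algebra_simps power3_eq_cube)
  then show ?thesis by (auto simp: eq_neg_iff_add_eq_0)
qed

lemma tr_nonzero:
  assumes card: "card (UNIV :: 'k::{field,finite} set) = 3 ^ m" and m: "m \<ge> 1"
  shows "\<exists>z::'k. abs_tr m z \<noteq> 0"
proof (rule ccontr)
  assume "\<not> ?thesis"
  then have all: "\<And>z::'k. abs_tr m z = 0" by auto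
  define p :: "'k poly" where "p = (\<Sum>i<m. monom 1 (3 ^ i))"
  have ev: "poly p z = abs_tr m z" for z
    by (simp add: p_def poly_sum poly_monom abs_tr_def)
  have "coeff p 1 = (\<Sum>i<m. if 3 ^ i = (1::nat) then 1 else 0)"
    by (simp add: p_def coeff_sum coeff_monom)
  also have "\<dots> = (\<Sum>i<m. if i = 0 then 1 else 0)"
    by (intro sum.cong) auto
  also have "\<dots> = 1" using m by (simp add: sum.delta)
  finally have "coeff p 1 \<noteq> 0" by simp
  then have p0: "p \<noteq> 0" by auto
  have "degree p \<le> 3 ^ (m - 1)"
    unfolding p_def by (rule degree_sum_le) (auto intro: order.trans[OF degree_monom_le] power_increasing)
  moreover have "card {x. poly p x = 0} \<le> degree p" by (rule card_poly_roots_bound[OF p0])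
  moreover have "{x. poly p x = 0} = UNIV" using all ev by auto
  ultimately have "(3::nat) ^ m \<le> 3 ^ (m - 1)" using card by (metis order.trans)
  moreover have "(3::nat) ^ (m - 1) < 3 ^ m" using m by (intro power_strict_increasing) auto
  ultimately show False by linarith
qed

lemma tr_zero:
  assumes "(3::'k::field) = 0" shows "abs_tr m (0::'k) = 0"
  by (simp add: abs_tr_def power_0_left)

lemma tr_neg:
  assumes "(3::'k::field) = 0" shows "abs_tr m (- x) = - abs_tr m (x::'k)"
  using tr_add[OF assms, of m x "-x"] tr_zero[OF assms, of m] by (simp add: eq_neg_iff_add_eq_0 add.commute)

lemma tr_diff:
  assumes "(3::'k::field) = 0" shows "abs_tr m (x - y) = abs_tr m x - abs_tr m (y::'k)"
  using tr_add[OF assms, of m x "-y"] tr_neg[OF assms, of m y] by simp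

lemma tr_count:
  assumes card: "card (UNIV :: 'k::{field,finite} set) = 3 ^ m" and m: "m \<ge> 1"
  shows "card {x::'k. abs_tr m x \<noteq> 0} = 2 * 3 ^ (m - 1)"
proof -
  have t: "(3::'k) = 0" by (rule three0[OF card])
  have two: "(2::'k) \<noteq> 0"
  proof
    assume h: "(2::'k) = 0"
    have "(3::'k) = 2 + 1" by simp
    with t h show False by simp
  qed
  have n1: "(1::'k) \<noteq> -1" using two by (metis eq_neg_iff_add_eq_0 one_add_one)
  obtain z0 :: 'k where z0: "abs_tr m z0 \<noteq> 0" using tr_nonzero[OF card m] by blast
  obtain z :: 'k where z: "abs_tr m z = 1"
  proof (cases "abs_tr m z0 = 1")
    case True then show ?thesis using that by blast
  next
    case False
    then have "abs_tr m z0 = -1" using tr_vals[OF card m, of z0] z0 by auto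
    then show ?thesis using that[of "-z0"] tr_neg[OF t] by simp
  qed
  define K where "K = {x::'k. abs_tr m x = 0}"
  define P where "P = {x::'k. abs_tr m x = 1}"
  define M where "M = {x::'k. abs_tr m x = -1}"
  have P: "P = (\<lambda>x. x + z) ` K"
    unfolding P_def K_def
    by (auto simp: tr_add[OF t] tr_diff[OF t] z intro!: image_eqI[where x="_ - z"])
  have M: "M = (\<lambda>x. x - z) ` K"
    unfolding M_def K_def
    by (auto simp: tr_add[OF t] tr_diff[OF t] z intro!: image_eqI[where x="_ + z"])
  have cP: "card P = card K" unfolding P by (rule card_image) (auto simp: inj_on_def)
  have cM: "card M = card K" unfolding M by (rule card_image) (auto simp: inj_on_def)
  have U: "UNIV = K \<union> (P \<union> M)" using tr_vals[OF card m] by (auto simp: K_def P_def M_def)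
  have "card (UNIV::'k set) = card K + (card P + card M)"
  proof -
    have d1: "P \<inter> M = {}" using n1 by (auto simp: P_def M_def)
    have d2: "K \<inter> (P \<union> M) = {}" by (auto simp: K_def P_def M_def)
    show ?thesis unfolding U by (simp add: card_Un_disjoint d1 d2)
  qed
  then have "3 * card K = 3 ^ m" using card cP cM by simp
  then have cK: "card K = 3 ^ (m - 1)" using m by (cases m) auto
  have "{x::'k. abs_tr m x \<noteq> 0} = P \<union> M" using tr_vals[OF card m] by (auto simp: P_def M_def)
  then have "card {x::'k. abs_tr m x \<noteq> 0} = card P + card M"
    using n1 by (simp add: card_Un_disjoint P_def M_def disjoint_iff) 
  then show ?thesis using cP cM cK by simp
qed

lemma runits_char:
  assumes t: "(3::'k::field) = 0"
  shows "(runits :: 'k tri set) = {x. fst x + fst (snd x) + snd (snd x) \<noteq> 0}"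
proof (intro set_eqI iffI)
  fix x :: "'k tri"
  assume "x \<in> runits"
  then obtain b where b: "rmult x b = rone" by (auto simp: runits_def)
  obtain x0 x1 x2 where x: "x = (x0,x1,x2)" by (cases x) auto
  obtain b0 b1 b2 where bb: "b = (b0,b1,b2)" by (cases b) auto
  have e: "x0*b0 + x1*b2 + x2*b1 = 1" "x0*b1 + x1*b0 + x2*b2 = 0" "x0*b2 + x1*b1 + x2*b0 = 0"
    using b by (simp_all add: x bb rmult_def rone_def)
  have "(x0+x1+x2) * (b0+b1+b2) = (x0*b0 + x1*b2 + x2*b1) + (x0*b1 + x1*b0 + x2*b2) + (x0*b2 + x1*b1 + x2*b0)"
    by (simp add: algebra_simps)
  then have "(x0+x1+x2) * (b0+b1+b2) = 1" using e by simp
  then show "x \<in> {x. fst x + fst (snd x) + snd (snd x) \<noteq> 0}" by (auto simp: x)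
next
  fix x :: "'k tri"
  assume "x \<in> {x. fst x + fst (snd x) + snd (snd x) \<noteq> 0}"
  then obtain a0 a1 a2 where x: "x = (a0,a1,a2)" and s: "a0 + a1 + a2 \<noteq> 0" by (cases x) auto
  define D where "D = a0^3 + a1^3 + a2^3 - 3*a0*a1*a2"
  have "D = (a0 + a1 + a2)^3" unfolding D_def using t frob3[OF t, of "a0+a1" a2] frob3[OF t, of a0 a1] by simp
  then have D: "D \<noteq> 0" using s by simp
  define p where "p = a0*a0 - a1*a2"
  define q where "q = a2*a2 - a0*a1"
  define r where "r = a1*a1 - a0*a2"
  define b where "b = (p/D, q/D, r/D)"
  have n0: "a0*p + a1*r + a2*q = D" unfolding p_def q_def r_def D_def
    by (simp add: algebra_simps power3_eq_cube)
  have n1: "a0*q + a1*p + a2*r = 0" unfolding p_def q_def r_def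
    by (simp add: algebra_simps)
  have n2: "a0*r + a1*q + a2*p = 0" unfolding p_def q_def r_def
    by (simp add: algebra_simps)
  have "rmult x b = ((a0*p + a1*r + a2*q)/D, (a0*q + a1*p + a2*r)/D, (a0*r + a1*q + a2*p)/D)"
    unfolding x b_def rmult_def by (simp add: add_divide_distrib)
  then have "rmult x b = rone" using D n0 n1 n2 by (simp add: rone_def)
  then show "x \<in> runits" unfolding runits_def by blast
qed

definition dotp :: "'k::field tri \<Rightarrow> 'k tri \<Rightarrow> 'k" where
  "dotp c x = fst c * fst x + fst (snd c) * fst (snd x) + snd (snd c) * snd (snd x)"

definition ssum :: "'k::field tri \<Rightarrow> 'k" where
  "ssum x = fst x + fst (snd x) + snd (snd x)"

definition NN :: "nat \<Rightarrow> 'k::{field,finite} tri \<Rightarrow> nat" where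
  "NN m c = card {x::'k tri. ssum x \<noteq> 0 \<and> abs_tr m (dotp c x) \<noteq> 0}"

definition rot :: "'k tri \<Rightarrow> 'k tri" where
  "rot x = (fst (snd x), snd (snd x), fst x)"

lemma NN_rot: "NN m (rot c) = NN m (c::'k::{field,finite} tri)"
proof -
  have "{x::'k tri. ssum x \<noteq> 0 \<and> abs_tr m (dotp (rot c) x) \<noteq> 0}
      = rot ` {x. ssum x \<noteq> 0 \<and> abs_tr m (dotp c x) \<noteq> 0}"
    by (auto simp: rot_def ssum_def dotp_def image_iff algebra_simps)
  moreover have "inj (rot :: 'k tri \<Rightarrow> 'k tri)" by (auto simp: inj_def rot_def)
  ultimately show ?thesis unfolding NN_def by (simp add: card_image inj_on_subset)
qed

lemma card_nonzero:
  assumes card: "card (UNIV :: 'k::{field,finite} set) = 3 ^ m"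
  shows "card {s::'k. s \<noteq> 0} = 3 ^ m - 1"
proof -
  have "{s::'k. s \<noteq> 0} = UNIV - {0}" by auto
  then show ?thesis using card by (simp add: card_Diff_singleton)
qed

lemma count_nonpar:
  fixes c :: "'k::{field,finite} tri"
  assumes card: "card (UNIV :: 'k set) = 3 ^ m" and m: "m \<ge> 1"
    and c: "fst c \<noteq> fst (snd c)"
  shows "NN m c = (3 ^ m - 1) * (2 * 3 ^ (m - 1)) * 3 ^ m"
proof -
  obtain c0 c1 c2 where cc: "c = (c0,c1,c2)" by (cases c) auto
  have d: "c1 - c0 \<noteq> 0" using c cc by simp
  define f :: "'k tri \<Rightarrow> 'k tri" where "f x = (ssum x, dotp c x, snd (snd x))" for x
  define g :: "'k tri \<Rightarrow> 'k tri" where "g y = (case y of (s,t,z) \<Rightarrow>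
      ((c1*(s-z) - (t - c2*z))/(c1 - c0), ((t - c2*z) - c0*(s-z))/(c1 - c0), z))" for y
  have fg: "f (g y) = y" for y
  proof -
    obtain s t z where y: "y = (s,t,z)" by (cases y) auto
    define x0 where "x0 = (c1*(s-z) - (t - c2*z))/(c1 - c0)"
    define x1 where "x1 = ((t - c2*z) - c0*(s-z))/(c1 - c0)"
    have e0: "(c1 - c0) * x0 = c1*(s-z) - (t - c2*z)" using d by (simp add: x0_def)
    have e1: "(c1 - c0) * x1 = (t - c2*z) - c0*(s-z)" using d by (simp add: x1_def)
    have "(c1 - c0) * (x0 + x1) = (c1 - c0) * (s - z)"
      unfolding distrib_left e0 e1 by (simp add: algebra_simps)
    then have h1: "x0 + x1 + z = s" using d by simp
    have "(c1 - c0) * (c0*x0 + c1*x1 + c2*z) = (c1 - c0) * t"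
    proof -
      have "(c1 - c0) * (c0*x0 + c1*x1 + c2*z) = c0*((c1 - c0) * x0) + c1*((c1 - c0) * x1) + (c1 - c0)*c2*z"
        by (simp add: algebra_simps)
      also have "\<dots> = (c1 - c0) * t" unfolding e0 e1 by (simp add: algebra_simps)
      finally show ?thesis .
    qed
    then have h2: "c0*x0 + c1*x1 + c2*z = t" using d by simp
    have "g y = (x0, x1, z)" by (simp add: g_def y x0_def x1_def)
    then show ?thesis using h1 h2 by (simp add: f_def ssum_def dotp_def cc y)
  qed
  define A where "A = {x::'k tri. ssum x \<noteq> 0 \<and> abs_tr m (dotp c x) \<noteq> 0}"
  define B where "B = {s::'k. s \<noteq> 0} \<times> {t::'k. abs_tr m t \<noteq> 0} \<times> (UNIV::'k set)"
  have "surj f" by (metis fg surjI)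
  then have inj: "inj f" by (intro finite_UNIV_surj_inj) simp_all
  have img: "f ` A = B"
  proof (intro set_eqI iffI)
    fix y assume "y \<in> f ` A" then show "y \<in> B" by (auto simp: A_def B_def f_def)
  next
    fix y assume y: "y \<in> B"
    have "g y \<in> A" using fg[of y] y by (cases y) (auto simp: A_def B_def f_def)
    then show "y \<in> f ` A" using fg[of y] by (metis image_eqI)
  qed
  have "NN m c = card A" by (simp add: NN_def A_def)
  also have "\<dots> = card B" using img inj by (metis card_image inj_on_subset subset_UNIV)
  also have "\<dots> = (3 ^ m - 1) * (2 * 3 ^ (m - 1)) * 3 ^ m"
    unfolding B_def card_cartesian_product card_nonzero[OF card] tr_count[OF card m] card by simp
  finally show ?thesis .
qed

lemma count_par:
  fixes l :: "'k::{field,finite}"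
  assumes card: "card (UNIV :: 'k set) = 3 ^ m" and m: "m \<ge> 1" and l: "l \<noteq> 0"
  shows "NN m (l,l,l) = (2 * 3 ^ (m - 1)) * (3 ^ m * 3 ^ m)"
proof -
  have t: "(3::'k) = 0" by (rule three0[OF card])
  define f :: "'k tri \<Rightarrow> 'k tri" where "f x = (ssum x, fst (snd x), snd (snd x))" for x
  define g :: "'k tri \<Rightarrow> 'k tri" where "g y = (case y of (s,y1,z) \<Rightarrow> (s - y1 - z, y1, z))" for y
  have fg: "f (g y) = y" for y by (cases y) (auto simp: f_def g_def ssum_def)
  have gf: "g (f x) = x" for x by (cases x) (auto simp: f_def g_def ssum_def)
  define A where "A = {x::'k tri. ssum x \<noteq> 0 \<and> abs_tr m (dotp (l,l,l) x) \<noteq> 0}"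
  define C where "C = {s::'k. abs_tr m (l * s) \<noteq> 0}"
  define B where "B = C \<times> (UNIV::'k set) \<times> (UNIV::'k set)"
  have dl: "dotp (l,l,l) x = l * ssum x" for x by (simp add: dotp_def ssum_def algebra_simps)
  have inj: "inj f" by (metis gf injI)
  have img: "f ` A = B"
  proof (intro set_eqI iffI)
    fix y assume "y \<in> f ` A" then show "y \<in> B" by (auto simp: A_def B_def C_def f_def dl)
  next
    fix y assume y: "y \<in> B"
    have "g y \<in> A" using fg[of y] y tr_zero[OF t, of m] 
      by (cases y) (auto simp: A_def B_def C_def f_def dl)
    then show "y \<in> f ` A" using fg[of y] by (metis image_eqI)
  qed
  have cC: "card C = card {t::'k. abs_tr m t \<noteq> 0}"
  proof -
    have "{t::'k. abs_tr m t \<noteq> 0} = (\<lambda>s. l * s) ` C"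
      using l by (auto simp: C_def image_iff intro!: exI[where x="_ / l"])
    moreover have "inj (\<lambda>s::'k. l * s)" using l by (auto simp: inj_def)
    ultimately show ?thesis by (metis card_image inj_on_subset subset_UNIV)
  qed
  have "NN m (l,l,l) = card A" by (simp add: NN_def A_def)
  also have "\<dots> = card B" using img inj by (metis card_image inj_on_subset subset_UNIV)
  also have "\<dots> = (2 * 3 ^ (m - 1)) * (3 ^ m * 3 ^ m)"
    unfolding B_def card_cartesian_product cC tr_count[OF card m] card by simp
  finally show ?thesis .
qed

lemma NN_nonconst:
  fixes c :: "'k::{field,finite} tri"
  assumes card: "card (UNIV :: 'k set) = 3 ^ m" and m: "m \<ge> 1"
    and c: "\<not> (fst c = fst (snd c) \<and> fst (snd c) = snd (snd c))"
  shows "NN m c = (3 ^ m - 1) * (2 * 3 ^ (m - 1)) * 3 ^ m"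
proof -
  obtain p q r where cc: "c = (p,q,r)" by (cases c) auto
  consider "p \<noteq> q" | "q \<noteq> r" | "r \<noteq> p" using c cc by auto
  then show ?thesis
  proof cases
    case 1 then show ?thesis using count_nonpar[OF card m, of c] cc by simp
  next
    case 2
    have "NN m c = NN m (rot c)" by (simp add: NN_rot)
    also have "\<dots> = (3 ^ m - 1) * (2 * 3 ^ (m - 1)) * 3 ^ m"
      using count_nonpar[OF card m, of "rot c"] 2 cc by (simp add: rot_def)
    finally show ?thesis .
  next
    case 3
    have "NN m c = NN m (rot (rot c))" by (simp add: NN_rot)
    also have "\<dots> = (3 ^ m - 1) * (2 * 3 ^ (m - 1)) * 3 ^ m"
      using count_nonpar[OF card m, of "rot (rot c)"] 3 cc by (simp add: rot_def)
    finally show ?thesis .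
  qed
qed

lemma sum_ind:
  fixes A :: "'a set"
  assumes "finite A"
  shows "(\<Sum>x\<in>A. (if P x then 1 else 0) :: nat) = card {x\<in>A. P x}"
proof -
  have "card {x\<in>A. P x} = (\<Sum>x\<in>{x\<in>A. P x}. (1::nat))" by (rule card_eq_sum)
  also have "\<dots> = (\<Sum>x\<in>A. (if P x then 1 else 0) :: nat)" by (rule sum.inter_filter[OF assms])
  finally show ?thesis by simp
qed

lemma lee_split:
  fixes a :: "'k::{field,finite} tri"
  assumes t: "(3::'k) = 0"
  shows "lee_ev m a = NN m (fst a, snd (snd a), fst (snd a)) + NN m (fst (snd a), fst a, snd (snd a))
     + NN m (snd (snd a), fst (snd a), fst a)"
proof -
  obtain a0 a1 a2 where a: "a = (a0,a1,a2)" by (cases a) auto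
  let ?c0 = "(a0,a2,a1)" and ?c1 = "(a1,a0,a2)" and ?c2 = "(a2,a1,a0)"
  let ?I = "\<lambda>c x. (if abs_tr m (dotp c x) \<noteq> 0 then 1 else 0) :: nat"
  have rm: "rmult a x = (dotp ?c0 x, dotp ?c1 x, dotp ?c2 x)" for x
    by (cases x) (simp add: a rmult_def dotp_def algebra_simps)
  have w: "lee_wt1 (Tr m (rmult a x)) = ?I ?c0 x + ?I ?c1 x + ?I ?c2 x" for x
    unfolding rm by (simp add: Tr_def lee_wt1_def)
  have S: "(\<Sum>x\<in>runits. ?I c x) = NN m c" for c :: "'k tri"
    unfolding runits_char[OF t] NN_def
    by (subst sum_ind) (auto simp: ssum_def intro: arg_cong[where f=card])
  have "lee_ev m a = (\<Sum>x\<in>runits. ?I ?c0 x) + (\<Sum>x\<in>runits. ?I ?c1 x) + (\<Sum>x\<in>runits. ?I ?c2 x)"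
    unfolding lee_ev_def w by (simp add: sum.distrib)
  then show ?thesis unfolding S by (simp add: a)
qed

theorem theorem5p5:
  fixes a :: "'k::{field,finite} tri" and m :: nat
  assumes "m \<ge> 1" and "card (UNIV :: 'k set) = 3 ^ m"
  shows "(a = (0,0,0) \<longrightarrow> lee_ev m a = 0)
    \<and> (\<forall>a3::'k. a3 \<noteq> 0 \<and> a = rmult u_minus_1_sq (a3,0,0) \<longrightarrow> lee_ev m a = 2 * 3 ^ (3*m))
    \<and> (a \<notin> ideal_u1sq \<longrightarrow> lee_ev m a = 2 * (3 ^ (3*m) - 3 ^ (2*m)))"
proof (intro conjI impI allI)
  note m = assms(1) and card = assms(2)
  have t: "(3::'k) = 0" by (rule three0[OF card])
  have m2: "(-2::'k) = 1"
  proof -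
    have "(-2::'k) = 1 - 3" by simp
    then show ?thesis using t by simp
  qed
  have usq: "rmult u_minus_1_sq (b,0,0) = (b,b,b)" for b :: 'k
    using m2 by (simp add: u_minus_1_sq_def u_minus_1_def rmult_def)
  obtain n where n: "m = Suc n" using m by (cases m) auto
  {
    assume a0: "a = (0,0,0)"
    show "lee_ev m a = 0"
      unfolding lee_ev_def a0 by (simp add: rmult_def Tr_def tr_zero[OF t] lee_wt1_def)
  }
  {
    fix a3 :: 'k
    assume h: "a3 \<noteq> 0 \<and> a = rmult u_minus_1_sq (a3,0,0)"
    then have a: "a = (a3,a3,a3)" using usq by simp
    from h have h: "a3 \<noteq> 0" by simp
    have "lee_ev m a = 3 * ((2 * 3 ^ (m - 1)) * (3 ^ m * 3 ^ m))"
      unfolding a lee_split[OF t] using count_par[OF card m, of a3] h by simp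
    also have "\<dots> = 2 * (3 ^ m) ^ 3" by (simp add: n power3_eq_cube)
    also have "((3::nat) ^ m) ^ 3 = 3 ^ (3*m)" by (simp add: power_mult[symmetric] mult.commute)
    finally show "lee_ev m a = 2 * 3 ^ (3*m)" .
  }
  {
    assume h: "a \<notin> ideal_u1sq"
    obtain a0 a1 a2 where a: "a = (a0,a1,a2)" by (cases a) auto
    have nc: "\<not> (a0 = a1 \<and> a1 = a2)"
    proof
      assume "a0 = a1 \<and> a1 = a2"
      then have "a = rmult u_minus_1_sq (a0,0,0)" using usq a by simp
      then show False using h by (auto simp: ideal_u1sq_def)
    qed
    let ?v = "(3 ^ m - 1) * (2 * 3 ^ (m - 1)) * 3 ^ m :: nat"
    have "lee_ev m a = 3 * ?v"
    proof -
      have "NN m (a0,a2,a1) = ?v" by (rule NN_nonconst[OF card m]) (use nc in auto)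
      moreover have "NN m (a1,a0,a2) = ?v" by (rule NN_nonconst[OF card m]) (use nc in auto)
      moreover have "NN m (a2,a1,a0) = ?v" by (rule NN_nonconst[OF card m]) (use nc in auto)
      ultimately show ?thesis unfolding lee_split[OF t] a by simp
    qed
    also have "\<dots> = 2 * (3 ^ (3*m) - 3 ^ (2*m))"
    proof -
      define q :: nat where "q = 3 ^ n"
      have qm: "3 * q = 3 ^ m" by (simp add: n q_def)
      have "3 * ?v = 2 * ((3*q - 1) * (3*q) * (3*q))" by (simp add: n q_def)
      also have "(3*q - 1) * (3*q) * (3*q) = (3*q)^3 - (3*q)^2"
        by (simp add: diff_mult_distrib power2_eq_square power3_eq_cube)
      also have "(3*q)^3 = 3 ^ (3*m)" unfolding qm by (simp add: power_mult[symmetric] mult.commute)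
      also have "(3*q)^2 = 3 ^ (2*m)" unfolding qm by (simp add: power_mult[symmetric] mult.commute)
      finally show ?thesis .
    qed
    finally show "lee_ev m a = 2 * (3 ^ (3*m) - 3 ^ (2*m))" .
  }
qed

end
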